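(* Let $\mathbf{a}\in\mathbb{Z}_{\ge0}^n$ with $\mathbf{a}\neq\mathbf{0}$, let $0<\beta<1$, let $\epsilon$ satisfy $0<\epsilon<1$ and let $c_1>0$ with $0<c_1\epsilon<1$. If $1-\beta\le \dfrac{c_1\epsilon}{n\|\mathbf{a}\|_1}$, then $$(1-c_1\epsilon)\,\mathrm{Vol}(P_{\mathbf{a}})\le \mathrm{Vol}\Big(\bigcup_{k=0}^\infty Q_k\Big)\le \mathrm{Vol}(P_{\mathbf{a}}).$$
   Context: For $\mathbf{c}\in\mathbb{R}^n$, $r\ge 0$, the cross-polytope ($L_1$-ball) is $C(\mathbf{c},r)=\{\mathbf{x}\in\mathbb{R}^n:\|\mathbf{x}-\mathbf{c}\|_1\le r\}$, where $\|\mathbf{u}\|_1=\sum_i|u_i|$. $P_{\mathbf{a}}=\mathrm{conv}\{\pm\mathbf{e}_1,\dots,\pm\mathbf{e}_n,\mathbf{a}\}=\mathrm{conv}(C(\mathbf{0},1)\cup\{\mathbf{a}\})$, with $\mathbf{e}_i$ the standard basis vectors. For a parameter $0<\beta<1$ and $k=0,1,2,\dots$, $Q_k=C((1-\beta^k)\mathbf{a},\beta^k)$. *)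

theory Defs
  imports "HOL-Analysis.Analysis"
begin

definition l1norm :: "real ^ 'n \<Rightarrow> real" where
  "l1norm u = (\<Sum>i\<in>UNIV. \<bar>u $ i\<bar>)"

definition cross_polytope :: "real ^ 'n \<Rightarrow> real \<Rightarrow> (real ^ 'n) set" where
  "cross_polytope c r = {x. l1norm (x - c) \<le> r}"

definition P_a :: "real ^ 'n \<Rightarrow> (real ^ 'n) set" where
  "P_a a = convex hull (insert a {s *\<^sub>R axis i 1 | s i. s \<in> {-1, 1}})"

definition Q_k :: "real \<Rightarrow> real ^ 'n \<Rightarrow> nat \<Rightarrow> (real ^ 'n) set" where
  "Q_k \<beta> a k = cross_polytope ((1 - \<beta> ^ k) *\<^sub>R a) (\<beta> ^ k)"

end

theory Submission imports Defs begin

lemma l1_nonneg: "0 \<le> l1norm u"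
  unfolding l1norm_def by (simp add: sum_nonneg)

lemma l1_tri: "l1norm (u + v) \<le> l1norm u + l1norm v"
  unfolding l1norm_def by (simp add: sum.distrib[symmetric] sum_mono abs_triangle_ineq)

lemma l1_scale: "l1norm (c *\<^sub>R u) = \<bar>c\<bar> * l1norm u"
  unfolding l1norm_def by (simp add: sum_distrib_left abs_mult)

lemma l1_zero: "l1norm (u::real^'n) = 0 \<Longrightarrow> u = 0"
  unfolding l1norm_def by (simp add: sum_nonneg_eq_0_iff vec_eq_iff)

lemma l1_axis: "l1norm (s *\<^sub>R axis i 1 :: real^'n) = \<bar>s\<bar>"
  unfolding l1norm_def by (simp add: axis_def abs_mult if_distrib cong: if_cong)

lemma vec_expand: "(\<Sum>i\<in>UNIV. (x $ i) *\<^sub>R axis i (1::real)) = (x::real^'n)"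
  by (simp add: vec_eq_iff sum_component axis_def if_distrib cong: if_cong)

lemma convex_C: "convex {x::real^'n. l1norm x \<le> 1}"
proof (rule convexI)
  fix x y :: "real^'n" and u v :: real
  assume "x \<in> {x. l1norm x \<le> 1}" "y \<in> {x. l1norm x \<le> 1}" "0 \<le> u" "0 \<le> v" "u + v = 1"
  then show "u *\<^sub>R x + v *\<^sub>R y \<in> {x. l1norm x \<le> 1}"
    using l1_tri[of "u *\<^sub>R x" "v *\<^sub>R y"] l1_scale[of u x] l1_scale[of v y]
      mult_left_mono[of "l1norm x" 1 u] mult_left_mono[of "l1norm y" 1 v] by auto
qed

lemma hull_C: "convex hull {s *\<^sub>R axis i 1 | s i. s \<in> {-1, 1::real}} = {x::real^'n. l1norm x \<le> 1}"
  (is "convex hull ?S = ?C")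
proof
  show "convex hull ?S \<subseteq> ?C"
  proof (rule hull_minimal)
    show "?S \<subseteq> ?C"
    proof
      fix x assume "x \<in> ?S"
      then obtain s i where "s \<in> {-1,1}" "x = s *\<^sub>R axis i 1" by blast
      then show "x \<in> ?C" using l1_axis[of s i] by auto
    qed
  qed (rule convex_C)
next
  let ?K = "convex hull ?S"
  have cK: "convex ?K" by simp
  have inS: "s \<in> {-1,1} \<Longrightarrow> s *\<^sub>R axis i 1 \<in> ?K" for s i
    by (rule hull_inc) blast
  have z: "0 \<in> ?K"
  proof -
    have "(1/2) *\<^sub>R ((-1::real) *\<^sub>R axis undefined 1) + (1/2) *\<^sub>R ((1::real) *\<^sub>R axis undefined 1) \<in> ?K"
      using inS[of "-1" undefined] inS[of 1 undefined] by (intro convexD[OF cK]) auto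
    then show ?thesis by simp
  qed
  show "?C \<subseteq> ?K"
  proof
    fix x :: "real^'n" assume x: "x \<in> ?C"
    define L where "L = l1norm x"
    show "x \<in> ?K"
    proof (cases "L = 0")
      case True then show ?thesis using l1_zero z L_def by auto
    next
      case False
      then have Lp: "L > 0" using l1_nonneg L_def by (metis less_eq_real_def)
      define p where "p i = sgn (x $ i) *\<^sub>R axis i (1::real)" for i
      have pK: "p i \<in> ?K" for i
        using z inS[of "-1" i] inS[of 1 i] unfolding p_def by (auto simp: sgn_if)
      have "(\<Sum>i\<in>UNIV. (\<bar>x $ i\<bar> / L) *\<^sub>R p i) \<in> ?K"
        apply (rule convex_sum[OF _ cK])
        using Lp pK by (auto simp: L_def l1norm_def sum_divide_distrib[symmetric])
      then have "L *\<^sub>R (\<Sum>i\<in>UNIV. (\<bar>x $ i\<bar> / L) *\<^sub>R p i) + (1 - L) *\<^sub>R 0 \<in> ?K"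
        using x Lp L_def by (intro convexD[OF cK] z) auto
      moreover have "L *\<^sub>R (\<Sum>i\<in>UNIV. (\<bar>x $ i\<bar> / L) *\<^sub>R p i) = x"
      proof -
        have "L *\<^sub>R (\<Sum>i\<in>UNIV. (\<bar>x $ i\<bar> / L) *\<^sub>R p i) = (\<Sum>i\<in>UNIV. (x $ i) *\<^sub>R axis i (1::real))"
          using Lp by (simp add: scaleR_sum_right p_def abs_mult_sgn)
        then show ?thesis by (simp add: vec_expand)
      qed
      ultimately show ?thesis by simp
    qed
  qed
qed

lemma P_char: "P_a a = {x. \<exists>u\<ge>0. \<exists>v\<ge>0. \<exists>b. u + v = 1 \<and> l1norm b \<le> 1 \<and> x = u *\<^sub>R a + v *\<^sub>R b}"
proof -
  have ne: "{s *\<^sub>R axis i 1 | s i. s \<in> {-1, 1::real}} \<noteq> ({}::(real^'n) set)" by blast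
  show ?thesis unfolding P_a_def convex_hull_insert[OF ne] hull_C by simp
qed



lemma lebesgue_closed_set: "closed S \<Longrightarrow> S \<in> sets lebesgue"
  by (metis borel_closed sets_completionI_sets sets_lborel)

lemma Q_closed: "closed (Q_k b a k)"
  unfolding Q_k_def cross_polytope_def l1norm_def
  by (intro closed_Collect_le continuous_intros)

lemma Q_sub: assumes "0 < \<beta>" "\<beta> < 1" shows "Q_k \<beta> a k \<subseteq> P_a a"
proof
  fix x assume x: "x \<in> Q_k \<beta> a k"
  define t where "t = \<beta> ^ k"
  have t: "0 < t" "t \<le> 1" using assms by (auto simp: t_def power_le_one)
  have g: "l1norm (x - (1 - t) *\<^sub>R a) \<le> t" using x by (simp add: Q_k_def cross_polytope_def t_def)
  define b where "b = (1/t) *\<^sub>R (x - (1 - t) *\<^sub>R a)"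
  have "l1norm b = (1/t) * l1norm (x - (1 - t) *\<^sub>R a)" using t by (simp add: b_def l1_scale)
  also have "\<dots> \<le> (1/t) * t" using g t by (intro mult_left_mono) auto
  finally have b1: "l1norm b \<le> 1" using t by simp
  have "x = (1 - t) *\<^sub>R a + t *\<^sub>R b" using t by (simp add: b_def)
  then show "x \<in> P_a a" unfolding P_char mem_Collect_eq
  proof -
    have "1 - t \<ge> 0" "t \<ge> 0" "(1 - t) + t = 1" using t by auto
    then show "\<exists>u\<ge>0. \<exists>v\<ge>0. \<exists>b. u + v = 1 \<and> l1norm b \<le> 1 \<and> x = u *\<^sub>R a + v *\<^sub>R b"
      using b1 \<open>x = (1 - t) *\<^sub>R a + t *\<^sub>R b\<close> by blast
  qed
qed

lemma P_compact: "compact (P_a a)"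
proof -
  have eq: "{s *\<^sub>R axis i 1 | s i. s \<in> {-1, 1::real}} = (\<lambda>(s,i). s *\<^sub>R axis i (1::real)) ` ({-1,1} \<times> (UNIV::'n::finite set))"
    by auto
  have fin: "finite ((\<lambda>(s,i). s *\<^sub>R axis i (1::real)) ` ({-1,1} \<times> (UNIV::'n::finite set)))" by simp
  have "finite (insert a {s *\<^sub>R axis i 1 | s i. s \<in> {-1, 1::real}})" using fin by (simp only: eq finite_insert)
  then show ?thesis unfolding P_a_def by (rule finite_imp_compact_convex_hull)
qed

lemma scaled_sub:
  fixes a :: "real ^ 'n"
  assumes beta: "0 < \<beta>" "\<beta> < 1" and d: "0 < d" "d < 1"
    and hA: "l1norm a * (1 - \<beta>) \<le> d"
    and x: "x \<in> P_a a"
  shows "(1 - d) *\<^sub>R x \<in> (\<Union>k. Q_k \<beta> a k)"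
proof -
  define A where "A = l1norm a"
  define lam where "lam = 1 - d"
  have A0: "A \<ge> 0" using l1_nonneg A_def by simp
  obtain u v b where uv: "u \<ge> 0" "v \<ge> 0" "u + v = 1" "l1norm b \<le> 1" "x = u *\<^sub>R a + v *\<^sub>R b"
    using x unfolding P_char by blast
  define \<sigma> where "\<sigma> = d + lam * v"
  have lam: "0 < lam" "lam < 1" using d by (auto simp: lam_def)
  have sig: "0 < \<sigma>" "\<sigma> \<le> 1" "v \<le> \<sigma>"
  proof -
    have h1: "d * v \<le> d" using uv d by (simp add: mult_left_le)
    have h2: "d * v \<le> v" using uv d by (simp add: mult_left_le_one_le)
    have h3: "(1 - d) * (1 - v) \<ge> 0" using uv d by simp
    from h1 h2 h3 show "0 < \<sigma>" "\<sigma> \<le> 1" "v \<le> \<sigma>" using uv d by (auto simp: \<sigma>_def lam_def algebra_simps)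
  qed
  have diff: "lam *\<^sub>R x - (1 - \<sigma>) *\<^sub>R a = (lam * v) *\<^sub>R b"
  proof -
    have "1 - \<sigma> = lam * u" using uv(3)
      by (simp add: \<sigma>_def lam_def algebra_simps) (metis distrib_left mult.right_neutral)
    then have e: "(1 - \<sigma>) *\<^sub>R a = (lam * u) *\<^sub>R a" by simp
    show ?thesis unfolding e uv(5) by (simp add: algebra_simps)
  qed
  have gs: "l1norm (lam *\<^sub>R x - (1 - \<sigma>) *\<^sub>R a) \<le> lam * \<sigma>"
  proof -
    have "l1norm (lam *\<^sub>R x - (1 - \<sigma>) *\<^sub>R a) = lam * v * l1norm b"
      using diff lam uv by (simp add: l1_scale)
    also have "\<dots> \<le> lam * v * 1" using uv lam by (intro mult_left_mono) auto
    also have "\<dots> \<le> lam * \<sigma>" using sig lam by (simp add: mult_left_mono)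
    finally show ?thesis .
  qed
  obtain m where "\<beta> ^ m < \<sigma>" using real_arch_pow_inv[OF sig(1) beta(2)] by blast
  define k where "k = (LEAST m. \<beta> ^ m < \<sigma>)"
  have k1: "\<beta> ^ k < \<sigma>" unfolding k_def by (rule LeastI) fact
  have k0: "k \<noteq> 0"
  proof
    assume "k = 0" then show False using k1 sig by simp
  qed
  have k2: "\<not> \<beta> ^ (k - 1) < \<sigma>" unfolding k_def by (rule not_less_Least) (use k0 k_def in auto)
  define t where "t = \<beta> ^ (k - 1)"
  have t1: "\<sigma> \<le> t" using k2 t_def by simp
  have t2: "\<beta> * t < \<sigma>" using k1 k0 by (simp add: t_def power_eq_if[of \<beta> k])
  have tpos: "t > 0" using beta by (simp add: t_def)
  have "l1norm (lam *\<^sub>R x - (1 - t) *\<^sub>R a) = l1norm ((lam *\<^sub>R x - (1 - \<sigma>) *\<^sub>R a) + (t - \<sigma>) *\<^sub>R a)"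
    by (simp add: algebra_simps)
  also have "\<dots> \<le> l1norm (lam *\<^sub>R x - (1 - \<sigma>) *\<^sub>R a) + (t - \<sigma>) * A"
    using l1_tri l1_scale t1 A_def by (metis abs_of_nonneg diff_ge_0_iff_ge)
  also have "\<dots> \<le> lam * \<sigma> + (t - \<sigma>) * A" using gs by simp
  also have "\<dots> \<le> t"
  proof -
    have "(t - \<sigma>) \<le> t * (1 - \<beta>)" using t2 by (simp add: algebra_simps)
    then have "(t - \<sigma>) * A \<le> t * (1 - \<beta>) * A" using A0 by (rule mult_right_mono)
    also have "\<dots> = t * (A * (1 - \<beta>))" by simp
    also have "\<dots> \<le> t * d" using hA A_def tpos by (intro mult_left_mono) auto
    finally have "(t - \<sigma>) * A \<le> t * d" .
    moreover have "lam * \<sigma> \<le> lam * t" using t1 lam by (intro mult_left_mono) auto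
    ultimately show ?thesis by (simp add: lam_def algebra_simps)
  qed
  finally have "lam *\<^sub>R x \<in> Q_k \<beta> a (k - 1)"
    by (simp add: Q_k_def cross_polytope_def t_def)
  then show ?thesis by (auto simp: lam_def)
qed

theorem mainTheorem2:
  fixes a :: "real ^ 'n" and \<beta> \<epsilon> c1 :: real
  assumes a_int: "\<forall>i. a $ i \<in> \<int> \<and> a $ i \<ge> 0"
    and a_nz: "a \<noteq> 0"
    and beta: "0 < \<beta>" "\<beta> < 1"
    and eps: "0 < \<epsilon>" "\<epsilon> < 1"
    and c1: "c1 > 0" "0 < c1 * \<epsilon>" "c1 * \<epsilon> < 1"
    and hb: "1 - \<beta> \<le> c1 * \<epsilon> / (real CARD('n) * l1norm a)"
  shows "(1 - c1 * \<epsilon>) * measure lebesgue (P_a a)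
           \<le> measure lebesgue (\<Union>k. Q_k \<beta> a k)
         \<and> measure lebesgue (\<Union>k. Q_k \<beta> a k) \<le> measure lebesgue (P_a a)"
proof -
  define N where "N = real CARD('n)"
  define A where "A = l1norm a"
  define d where "d = c1 * \<epsilon> / N"
  define U where "U = (\<Union>k. Q_k \<beta> a k)"
  have N1: "N \<ge> 1" unfolding N_def by simp
  have Apos: "A > 0" using l1_nonneg[of a] l1_zero[of a] a_nz A_def by fastforce
  have d0: "0 < d" using c1 N1 by (simp add: d_def)
  have d1: "d < 1"
  proof -
    have "c1 * \<epsilon> * 1 \<le> c1 * \<epsilon> * N" using c1 N1 by (intro mult_left_mono) auto
    then have "d \<le> c1 * \<epsilon>" unfolding d_def using N1 by (simp add: divide_le_eq)
    then show ?thesis using c1 by simp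
  qed
  have Nd: "N * d = c1 * \<epsilon>" using N1 by (simp add: d_def)
  have hA: "A * (1 - \<beta>) \<le> d"
  proof -
    have "(1 - \<beta>) * (N * A) \<le> c1 * \<epsilon>" using hb Apos N1
      by (simp add: N_def A_def pos_le_divide_eq)
    then have "N * (A * (1 - \<beta>)) \<le> N * d" using Nd by (simp add: algebra_simps)
    then show ?thesis using N1 by simp
  qed
  have PL: "P_a a \<in> lmeasurable" by (rule lmeasurable_compact[OF P_compact])
  have US: "U \<in> sets lebesgue" unfolding U_def
    using lebesgue_closed_set[OF Q_closed] by (intro sets.countable_UN) auto
  have UP: "U \<subseteq> P_a a" unfolding U_def using Q_sub[OF beta] by blast
  have up: "measure lebesgue U \<le> measure lebesgue (P_a a)"
    by (rule measure_mono_fmeasurable[OF UP US PL])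
  have UL: "U \<in> lmeasurable" by (rule fmeasurableI2[OF PL UP US])
  have sub: "(\<lambda>x. (1 - d) *\<^sub>R x + 0) ` P_a a \<subseteq> U"
    using scaled_sub[OF beta d0 d1, of a] hA A_def U_def by auto
  have scl: "measure lebesgue ((\<lambda>x. (1 - d) *\<^sub>R x + 0) ` P_a a) = (1 - d) ^ CARD('n) * measure lebesgue (P_a a)"
    using measure_lebesgue_affine[of "1 - d" 0 "P_a a"] d1 by simp
  have SL: "(\<lambda>x. (1 - d) *\<^sub>R x + 0) ` P_a a \<in> sets lebesgue"
  proof -
    have "compact ((\<lambda>x. (1 - d) *\<^sub>R x) ` P_a a)" by (rule compact_scaling[OF P_compact])
    then have "(\<lambda>x. (1 - d) *\<^sub>R x) ` P_a a \<in> lmeasurable" by (rule lmeasurable_compact)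
    then show ?thesis by (simp add: fmeasurable_def)
  qed
  have low1: "(1 - d) ^ CARD('n) * measure lebesgue (P_a a) \<le> measure lebesgue U"
    using measure_mono_fmeasurable[OF sub SL UL] scl by simp
  have bern: "1 - c1 * \<epsilon> \<le> (1 - d) ^ CARD('n)"
    using Bernoulli_inequality[of "- d" "CARD('n)"] d1 Nd N_def by simp
  have "(1 - c1 * \<epsilon>) * measure lebesgue (P_a a) \<le> (1 - d) ^ CARD('n) * measure lebesgue (P_a a)"
    by (rule mult_right_mono[OF bern]) simp
  then show ?thesis using low1 up U_def by simp
qed

end
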